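(* Let $m$ divide $n$ and let $f\colon\{0,\dots,n-1\}^d\to\{0,1\}$ be $k$-monotone. Then there is an $m$-block function $h\colon\{0,\dots,n-1\}^d\to\{0,1\}$ such that $\mathrm{dist}(f,h)<kd/m$.
   Context: $\{0,\dots,n-1\}^d$ is ordered coordinatewise; $f$ is $k$-monotone if there is no chain $x_1\preceq\cdots\preceq x_{k+1}$ with $f(x_1)=1$ and $f(x_i)\neq f(x_{i+1})$ for all $i\in[k]$. $\mathrm{dist}(f,h)$ is the fraction of points where $f,h$ differ. The domain is partitioned into $m^d$ blocks: for $x\in\{0,\dots,m-1\}^d$, the block of $x$ is $\{(n/m)x+z : z\in\{0,\dots,n/m-1\}^d\}$. A function is an $m$-block function if it is constant on each block. *)

theory Defs
  imports Complex_Main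
begin

definition grid :: "nat \<Rightarrow> nat \<Rightarrow> nat list set" where
  "grid n d = {x. length x = d \<and> (\<forall>i<d. x ! i < n)}"

definition cw_le :: "nat list \<Rightarrow> nat list \<Rightarrow> bool" where
  "cw_le x y \<longleftrightarrow> length x = length y \<and> (\<forall>i<length x. x ! i \<le> y ! i)"

text \<open>Boolean functions: True stands for 1, False for 0.
  f is k-monotone on the grid if there is no chain c 0 \<preceq> ... \<preceq> c k of grid points
  with f (c 0) = 1 and f (c i) \<noteq> f (c (i+1)) for all i < k.\<close>
definition k_monotone :: "nat \<Rightarrow> nat \<Rightarrow> nat \<Rightarrow> (nat list \<Rightarrow> bool) \<Rightarrow> bool" where
  "k_monotone n d k f \<longleftrightarrow>
     \<not> (\<exists>c :: nat \<Rightarrow> nat list.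
          (\<forall>i\<le>k. c i \<in> grid n d) \<and> (\<forall>i<k. cw_le (c i) (c (Suc i))) \<and>
          f (c 0) \<and> (\<forall>i<k. f (c i) \<noteq> f (c (Suc i))))"

definition dist_fn :: "nat \<Rightarrow> nat \<Rightarrow> (nat list \<Rightarrow> bool) \<Rightarrow> (nat list \<Rightarrow> bool) \<Rightarrow> real" where
  "dist_fn n d f h = real (card {x \<in> grid n d. f x \<noteq> h x}) / real (card (grid n d))"

definition block_fn :: "nat \<Rightarrow> nat \<Rightarrow> nat \<Rightarrow> (nat list \<Rightarrow> bool) \<Rightarrow> bool" where
  "block_fn n d m h \<longleftrightarrow>
     (\<forall>x\<in>grid n d. \<forall>y\<in>grid n d.
        (\<forall>i<d. x ! i div (n div m) = y ! i div (n div m)) \<longrightarrow> h x = h y)"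

end

theory Submission
  imports Defs
begin

lemma grid_eq: "grid n d = {xs. set xs \<subseteq> {..<n} \<and> length xs = d}"
  by (auto simp: grid_def in_set_conv_nth) (meson lessThan_iff nth_mem subsetD)

lemma card_grid: "card (grid n d) = n ^ d"
  unfolding grid_eq by (simp add: card_lists_length_eq)

lemma finite_grid: "finite (grid n d)"
  unfolding grid_eq by (simp add: finite_lists_length_eq)

lemma diag_bound: "(m::nat) \<ge> 1 \<Longrightarrow> m ^ d - (m - 1) ^ d \<le> d * m ^ (d - 1)"
proof (induction d)
  case 0 then show ?case by simp
next
  case (Suc d)
  have le: "(m-1)^d \<le> m^d" by (simp add: power_mono)
  show ?case
  proof (cases d)
    case 0 then show ?thesis using Suc by simp
  next
    case (Suc e)
    have "m ^ Suc d - (m - 1) ^ Suc d = m * (m^d - (m-1)^d) + (m-1)^d"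
      using le Suc.prems by (simp add: algebra_simps diff_mult_distrib2 diff_mult_distrib)
    also have "\<dots> \<le> m * (d * m^(d-1)) + m^d"
      using Suc.IH Suc.prems le by (simp add: add_mono)
    also have "\<dots> = Suc d * m ^ (Suc d - 1)" using Suc by (simp add: algebra_simps)
    finally show ?thesis .
  qed
qed

lemma card_S: "card {c \<in> grid m d. 0 \<in> set c} = m ^ d - (m - 1) ^ d"
proof -
  have eq: "grid m d - {c \<in> grid m d. 0 \<in> set c} = {xs. set xs \<subseteq> {1..<m} \<and> length xs = d}"
    unfolding grid_eq by (auto simp: Suc_le_eq)
  have "card (grid m d - {c \<in> grid m d. 0 \<in> set c}) = (m - 1) ^ d"
    unfolding eq by (simp add: card_lists_length_eq)
  moreover have "card (grid m d - {c \<in> grid m d. 0 \<in> set c}) = m ^ d - card {c \<in> grid m d. 0 \<in> set c}"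
    by (subst card_Diff_subset) (auto simp: finite_grid card_grid)
  moreover have "card {c \<in> grid m d. 0 \<in> set c} \<le> m ^ d"
    by (metis (no_types, lifting) card_grid card_mono finite_grid mem_Collect_eq subsetI)
  ultimately show ?thesis by linarith
qed

theorem lemma6p1:
  fixes n m d k :: nat and f :: "nat list \<Rightarrow> bool"
  assumes "0 < m" "m dvd n" "1 \<le> d" "1 \<le> k"
    and "k_monotone n d k f"
  shows "\<exists>h :: nat list \<Rightarrow> bool. block_fn n d m h \<and>
           dist_fn n d f h < real k * real d / real m"
proof (cases "n = 0")
  case True
  have "grid n d = {}" using True assms(3) by (auto simp: grid_def) (meson Suc_le_lessD)
  hence "dist_fn n d f f = 0" by (simp add: dist_fn_def)
  moreover have "block_fn n d m f" using \<open>grid n d = {}\<close> by (simp add: block_fn_def)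
  moreover have "real k * real d / real m > 0" using assms by simp
  ultimately show ?thesis by auto
next
  case False
  define s where "s = n div m"
  have nms: "n = m * s" using assms(2) s_def by simp
  have spos: "s > 0" using False nms by (cases s) auto
  define bi where "bi = (\<lambda>x::nat list. map (\<lambda>a. a div s) x)"
  define cor where "cor = (\<lambda>b::nat list. map (\<lambda>a. a * s) b)"
  define h where "h = (\<lambda>x. f (cor (bi x)))"
  have bf: "block_fn n d m h"
    unfolding block_fn_def
  proof (intro ballI impI)
    fix x y assume x: "x \<in> grid n d" and y: "y \<in> grid n d"
      and e: "\<forall>i<d. x ! i div (n div m) = y ! i div (n div m)"
    have "bi x = bi y" using x y e unfolding bi_def s_def grid_def
      by (intro nth_equalityI) auto
    thus "h x = h y" by (simp add: h_def)
  qed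
  define E where "E = {x \<in> grid n d. f x \<noteq> h x}"
  define NB where "NB = bi ` E"
  define fib where "fib b = {x \<in> grid n d. bi x = b}" for b
  have bi_grid: "bi x \<in> grid m d" if "x \<in> grid n d" for x
    using that spos unfolding grid_def bi_def nms
    by (auto simp: less_mult_imp_div_less mult.commute)
  have cor_grid: "cor b \<in> grid n d" if "b \<in> grid m d" for b
  proof -
    have "b ! i * s < m * s" if "i < d" for i
      using \<open>b \<in> grid m d\<close> that spos by (simp add: grid_def)
    thus ?thesis using that unfolding grid_def cor_def nms by auto
  qed
  have bi_cor: "bi (cor b) = b" for b
    unfolding bi_def cor_def using spos by (simp add: map_idI)
  have fib_card: "card (fib b) \<le> s ^ d" if "b \<in> grid m d" for b
  proof -
    have "fib b \<subseteq> (\<lambda>z. map2 (\<lambda>a c. a * s + c) b z) ` grid s d"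
    proof
      fix x assume "x \<in> fib b"
      hence x: "x \<in> grid n d" "bi x = b" by (auto simp: fib_def)
      have "x = map2 (\<lambda>a c. a * s + c) b (map (\<lambda>a. a mod s) x)"
        using x that by (intro nth_equalityI) (auto simp: grid_def bi_def)
      moreover have "map (\<lambda>a. a mod s) x \<in> grid s d"
        using x spos by (auto simp: grid_def)
      ultimately show "x \<in> (\<lambda>z. map2 (\<lambda>a c. a * s + c) b z) ` grid s d" by blast
    qed
    hence "card (fib b) \<le> card ((\<lambda>z. map2 (\<lambda>a c. a * s + c) b z) ` grid s d)"
      by (intro card_mono finite_imageI finite_grid)
    also have "\<dots> \<le> card (grid s d)" by (rule card_image_le[OF finite_grid])
    finally show ?thesis by (simp add: card_grid)
  qed
  have E_fib: "card (E \<inter> fib b) \<le> s ^ d - 1" if "b \<in> grid m d" for b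
  proof -
    have cf: "cor b \<in> fib b" using cor_grid[OF that] bi_cor by (simp add: fib_def)
    have "cor b \<notin> E" using bi_cor by (simp add: E_def h_def)
    hence "E \<inter> fib b \<subseteq> fib b - {cor b}" by auto
    moreover have "finite (fib b)" unfolding fib_def using finite_grid by simp
    ultimately have "card (E \<inter> fib b) \<le> card (fib b) - 1"
      using cf by (metis card_Diff_singleton card_mono finite_Diff)
    thus ?thesis using fib_card[OF that] by linarith
  qed
  have NB_grid: "NB \<subseteq> grid m d" using bi_grid by (auto simp: NB_def E_def)
  have finNB: "finite NB" using NB_grid finite_grid finite_subset by blast
  have cardE: "card E \<le> card NB * (s ^ d - 1)"
  proof -
    have sub: "E \<subseteq> (\<Union>b\<in>NB. E \<inter> fib b)" by (auto simp: NB_def fib_def E_def)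
    have "card E \<le> card (\<Union>b\<in>NB. E \<inter> fib b)"
    proof (rule card_mono)
      have "finite (grid n d)" by (rule finite_grid)
      thus "finite (\<Union>b\<in>NB. E \<inter> fib b)" by (rule finite_subset[rotated]) (auto simp: fib_def)
    qed (rule sub)
    also have "\<dots> \<le> (\<Sum>b\<in>NB. card (E \<inter> fib b))" by (rule card_UN_le[OF finNB])
    also have "\<dots> \<le> (\<Sum>b\<in>NB. s ^ d - 1)" using E_fib NB_grid by (intro sum_mono) auto
    finally show ?thesis by simp
  qed
  have two: "\<exists>y. y \<in> fib b \<and> f y = v" if bNB: "b \<in> NB" for b v
  proof -
    obtain x where x: "x \<in> E" "bi x = b" using bNB by (auto simp: NB_def)
    have "cor b \<in> fib b" using cor_grid bi_cor NB_grid bNB by (auto simp: fib_def)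
    moreover have "x \<in> fib b" using x by (auto simp: fib_def E_def)
    moreover have "f x \<noteq> f (cor b)" using x by (auto simp: E_def h_def)
    ultimately show ?thesis by (cases "f x = v") auto
  qed
  have keyNB: "card NB \<le> k * (m ^ d - (m - 1) ^ d)"
  proof -
    define S where "S = {c \<in> grid m d. 0 \<in> set c}"
    define D where "D = (\<lambda>b::nat list. map (\<lambda>a. a - Min (set b)) b)"
    have D_S: "D b \<in> S" if bg: "b \<in> grid m d" for b
    proof -
      have ne: "set b \<noteq> {}" using bg assms(3) by (auto simp: grid_def)
      have "Min (set b) \<in> set b" using ne by simp
      then obtain j where j: "j < length b" "b ! j = Min (set b)" by (auto simp: in_set_conv_nth)
      have "D b ! j = 0" using j by (simp add: D_def)
      hence "0 \<in> set (D b)" using j by (metis D_def length_map nth_mem)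
      moreover have "D b \<in> grid m d" using bg by (auto simp: grid_def D_def less_imp_diff_less)
      ultimately show ?thesis by (simp add: S_def)
    qed
    have D_inv: "b = map (\<lambda>a. a + Min (set b)) (D b)" for b
    proof (intro nth_equalityI)
      fix i assume "i < length b"
      hence "Min (set b) \<le> b ! i" by (simp add: Min_le)
      thus "b ! i = map (\<lambda>a. a + Min (set b)) (D b) ! i" using \<open>i < length b\<close> by (simp add: D_def)
    qed (simp add: D_def)
    have fibk: "card (NB \<inter> {b. D b = c}) \<le> k" if cS: "c \<in> S" for c
    proof -
      define T where "T = {t. map (\<lambda>a. a + t) c \<in> NB}"
      have lc: "length c = d" using cS by (simp add: S_def grid_def)
      have Tfin: "finite T"
      proof (rule finite_subset)
        show "T \<subseteq> {..<m}"
        proof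
          fix t assume "t \<in> T"
          hence "map (\<lambda>a. a+t) c \<in> grid m d" using NB_grid T_def by auto
          hence "map (\<lambda>a. a+t) c ! 0 < m" using lc assms(3) unfolding grid_def by simp
          hence "c!0 + t < m" using lc assms(3) by simp
          thus "t \<in> {..<m}" by simp
        qed
      qed simp
      have Tk: "card T \<le> k"
      proof (rule ccontr)
        assume "\<not> card T \<le> k"
        hence ck: "Suc k \<le> card T" by simp
        define L where "L = sorted_list_of_set T"
        have lL: "length L = card T" by (simp add: L_def)
        have sL: "sorted_wrt (<) L" by (simp add: L_def)
        have setL: "set L = T" using Tfin by (simp add: L_def)
        define tt where "tt j = L ! j" for j
        have ttT: "tt j \<in> T" if "j \<le> k" for j
        proof -
          have "j < length L" using that ck lL by simp
          hence "L ! j \<in> set L" by (rule nth_mem)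
          thus ?thesis using setL by (simp add: tt_def)
        qed
        have ttmono: "tt i < tt (Suc i)" if "i < k" for i
          using sorted_wrt_nth_less[OF sL, of i "Suc i"] that ck lL unfolding tt_def by simp
        define blk where "blk j = map (\<lambda>a. a + tt j) c" for j
        have blkNB: "blk j \<in> NB" if "j \<le> k" for j using ttT[OF that] by (simp add: T_def blk_def)
        define ch where "ch j = (SOME y. y \<in> fib (blk j) \<and> f y = even j)" for j
        have ch: "ch j \<in> fib (blk j) \<and> f (ch j) = even j" if "j \<le> k" for j
          unfolding ch_def by (rule someI_ex) (rule two[OF blkNB[OF that]])
        have "\<exists>c. (\<forall>i\<le>k. c i \<in> grid n d) \<and> (\<forall>i<k. cw_le (c i) (c (Suc i))) \<and>
          f (c 0) \<and> (\<forall>i<k. f (c i) \<noteq> f (c (Suc i)))"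
        proof (intro exI[of _ ch] conjI allI impI)
          fix i assume "i \<le> k" thus "ch i \<in> grid n d" using ch by (auto simp: fib_def)
        next
          show "f (ch 0)" using ch[of 0] by simp
        next
          fix i assume "i < k" thus "f (ch i) \<noteq> f (ch (Suc i))" using ch[of i] ch[of "Suc i"] by simp
        next
          fix i assume ik: "i < k"
          have a: "ch i \<in> grid n d" "bi (ch i) = blk i" using ch[of i] ik by (auto simp: fib_def)
          have b: "ch (Suc i) \<in> grid n d" "bi (ch (Suc i)) = blk (Suc i)"
            using ch[of "Suc i"] ik by (auto simp: fib_def)
          have lt: "ch i ! q < ch (Suc i) ! q" if q: "q < d" for q
          proof (rule ccontr)
            assume "\<not> ?thesis"
            hence "ch (Suc i) ! q div s \<le> ch i ! q div s" by (simp add: div_le_mono)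
            moreover have "ch i ! q div s = c ! q + tt i"
            proof -
              have "bi (ch i) ! q = ch i ! q div s" using a(1) q by (simp add: bi_def grid_def)
              thus ?thesis using a(2) q lc by (simp add: blk_def)
            qed
            moreover have "ch (Suc i) ! q div s = c ! q + tt (Suc i)"
            proof -
              have "bi (ch (Suc i)) ! q = ch (Suc i) ! q div s" using b(1) q by (simp add: bi_def grid_def)
              thus ?thesis using b(2) q lc by (simp add: blk_def)
            qed
            ultimately show False using ttmono[OF ik] by simp
          qed
          show "cw_le (ch i) (ch (Suc i))" using a b lt by (auto simp: cw_le_def grid_def less_imp_le)
        qed
        thus False using assms(5) by (simp add: k_monotone_def)
      qed
      have "NB \<inter> {b. D b = c} \<subseteq> (\<lambda>t. map (\<lambda>a. a + t) c) ` T"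
      proof
        fix b assume "b \<in> NB \<inter> {b. D b = c}"
        hence b: "b \<in> NB" "D b = c" by auto
        have beq: "b = map (\<lambda>a. a + Min (set b)) c" using D_inv[of b] b by simp
        hence "Min (set b) \<in> T" using b(1) unfolding T_def by simp
        thus "b \<in> (\<lambda>t. map (\<lambda>a. a + t) c) ` T" using beq by blast
      qed
      hence "card (NB \<inter> {b. D b = c}) \<le> card ((\<lambda>t. map (\<lambda>a. a + t) c) ` T)"
        by (rule card_mono[OF finite_imageI[OF Tfin]])
      also have "\<dots> \<le> card T" by (rule card_image_le[OF Tfin])
      finally show ?thesis using Tk by simp
    qed
    have sub: "NB \<subseteq> (\<Union>c\<in>S. NB \<inter> {b. D b = c})" using D_S NB_grid by auto
    have finS: "finite S" using finite_grid by (simp add: S_def)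
    have "card NB \<le> card (\<Union>c\<in>S. NB \<inter> {b. D b = c})"
      by (rule card_mono[OF _ sub]) (auto intro: finNB)
    also have "\<dots> \<le> (\<Sum>c\<in>S. card (NB \<inter> {b. D b = c}))" by (rule card_UN_le[OF finS])
    also have "\<dots> \<le> (\<Sum>c\<in>S. k)" using fibk by (intro sum_mono) auto
    also have "\<dots> = k * card S" by simp
    also have "card S = m ^ d - (m - 1) ^ d" unfolding S_def by (rule card_S)
    finally show ?thesis .
  qed
  have "card E < k * d * m ^ (d - 1) * s ^ d"
  proof -
    have "card E \<le> k * (m ^ d - (m - 1) ^ d) * (s ^ d - 1)"
      using cardE keyNB by (meson le_trans mult_le_mono1)
    also have "\<dots> \<le> k * (d * m ^ (d - 1)) * (s ^ d - 1)"
      using diag_bound[of m d] assms(1) by (intro mult_le_mono1 mult_le_mono2) auto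
    also have "\<dots> < k * d * m ^ (d - 1) * s ^ d"
      using assms spos by (simp add: diff_less)
    finally show ?thesis .
  qed
  hence "real (card E) * real m < real k * real d * real m ^ (d - 1) * real s ^ d * real m"
    using assms(1) by (metis of_nat_less_iff of_nat_mult of_nat_power mult_strict_right_mono of_nat_0_less_iff)
  also have "\<dots> = real k * real d * real (card (grid n d))"
  proof -
    have "m ^ d = m ^ (d - 1) * m" using assms(3)
      by (metis Suc_diff_1 less_le_trans power_Suc2 zero_less_one)
    thus ?thesis by (simp add: card_grid nms power_mult_distrib)
  qed
  finally have "real (card E) / real (card (grid n d)) < real k * real d / real m"
    using assms(1) False by (simp add: card_grid field_simps)
  hence "dist_fn n d f h < real k * real d / real m" by (simp add: dist_fn_def E_def)
  thus ?thesis using bf by blast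
qed

end
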